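(* Let $\nu\ge 1$, let $n_1,\dots,n_\nu\ge 0$ be integers, $N=n_1+\dots+n_\nu$, and let $\Omega=\coprod_{j=1}^{\nu}P_j$ be a set with $N$ elements partitioned into disjoint subsets with $\#P_j=n_j$. Let $S_N$ be the group of permutations of $\Omega$ and $Y\{n_j\}\subset S_N$ the Young subgroup of permutations sending each $P_j$ to itself. In the algebra $\Delta\{n_j\}$ (notation in the context), for any two admissible matrices $\{a_{ij}\}$ and $\{b_{jk}\}$ we have $$\Xi\{a_{ij}\}\cdot \Xi\{b_{jk}\}=\sum_{\{c_{ik}\}}\frac{\prod_{i,j} a_{ij}!\,\prod_{j,k} b_{jk}!}{\prod_j n_j!}\left(\sum_{\{t_{ijk}\}}\frac{1}{\prod_{i,j,k}t_{ijk}!}\right)\Xi\{c_{ik}\},$$ where the outer sum is over all admissible matrices $\{c_{ik}\}$, and the inner sum is over all collections of integers $t_{ijk}\ge 0$ ($i,j,k=1,\dots,\nu$) such that $\sum_i t_{ijk}=b_{jk}$, $\sum_j t_{ijk}=c_{ik}$, $\sum_k t_{ijk}=a_{ij}$ for all indices.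
   Context: An admissible matrix is a $\nu\times\nu$ matrix $\{a_{ij}\}$ of nonnegative integers with $\sum_i a_{ij}=n_j$ for all $j$ and $\sum_j a_{ij}=n_i$ for all $i$. Each double coset $Y\{n_j\}\,g\,Y\{n_j\}$ is determined by the admissible matrix $a_{ij}=\#(g(P_i)\cap P_j)$, and every admissible matrix arises this way; denote this double coset by $\xi\{a_{ij}\}$. Its cardinality is $\mu\{a_{ij}\}=\prod_j (n_j!)^2/\prod_{i,j}a_{ij}!$. Let $\Pi=\frac{1}{\prod_j n_j!}\sum_{h\in Y\{n_j\}}h\in\mathbb{C}[S_N]$ and $\Delta\{n_j\}=\Pi\,\mathbb{C}[S_N]\,\Pi$, the subalgebra of the group algebra of elements invariant under left and right multiplication by $Y\{n_j\}$. It has basis $\Xi\{a_{ij}\}=\frac{1}{\mu\{a_{ij}\}}\sum_{g\in\xi\{a_{ij}\}}g$, indexed by admissible matrices. *)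

theory Defs
  imports "HOL-Analysis.Analysis" "HOL-Combinatorics.Permutations"
begin

text \<open>Blocks are indexed by 0..nu-1; matrices are functions nat => nat => nat,
 only their entries with indices below nu matter.\<close>

definition admissible :: "nat \<Rightarrow> (nat \<Rightarrow> nat) \<Rightarrow> (nat \<Rightarrow> nat \<Rightarrow> nat) \<Rightarrow> bool" where
  "admissible nu n a \<longleftrightarrow>
     (\<forall>j<nu. (\<Sum>i<nu. a i j) = n j) \<and> (\<forall>i<nu. (\<Sum>j<nu. a i j) = n i)"

definition adm_set :: "nat \<Rightarrow> (nat \<Rightarrow> nat) \<Rightarrow> (nat \<Rightarrow> nat \<Rightarrow> nat) set" where
  "adm_set nu n = {c. admissible nu n c \<and> (\<forall>i j. \<not> (i < nu \<and> j < nu) \<longrightarrow> c i j = 0)}"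

definition SN :: "'a set \<Rightarrow> ('a \<Rightarrow> 'a) set" where
  "SN Omega = {g. g permutes Omega}"

definition xi :: "'a set \<Rightarrow> nat \<Rightarrow> (nat \<Rightarrow> 'a set) \<Rightarrow> (nat \<Rightarrow> nat \<Rightarrow> nat) \<Rightarrow> ('a \<Rightarrow> 'a) set" where
  "xi Omega nu P a = {g \<in> SN Omega. \<forall>i<nu. \<forall>j<nu. card (g ` P i \<inter> P j) = a i j}"

definition mu :: "nat \<Rightarrow> (nat \<Rightarrow> nat) \<Rightarrow> (nat \<Rightarrow> nat \<Rightarrow> nat) \<Rightarrow> real" where
  "mu nu n a = (\<Prod>j<nu. (fact (n j))^2) / (\<Prod>i<nu. \<Prod>j<nu. fact (a i j))"

text \<open>Elements of the group algebra C[S_N] are functions from permutations to complex numbers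
 (coefficient of each group element). The basis element Xi{a}.\<close>
definition Xi :: "'a set \<Rightarrow> nat \<Rightarrow> (nat \<Rightarrow> nat) \<Rightarrow> (nat \<Rightarrow> 'a set) \<Rightarrow> (nat \<Rightarrow> nat \<Rightarrow> nat)
                   \<Rightarrow> ('a \<Rightarrow> 'a) \<Rightarrow> complex" where
  "Xi Omega nu n P a = (\<lambda>g. if g \<in> xi Omega nu P a then complex_of_real (1 / mu nu n a) else 0)"

text \<open>Multiplication in C[S_N]. The group product g * h means "first g, then h",
 i.e. the map h o g (this is the convention under which the product formula holds).\<close>
definition gmult :: "'a set \<Rightarrow> (('a \<Rightarrow> 'a) \<Rightarrow> complex) \<Rightarrow> (('a \<Rightarrow> 'a) \<Rightarrow> complex)
                      \<Rightarrow> ('a \<Rightarrow> 'a) \<Rightarrow> complex" where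
  "gmult Omega f g = (\<lambda>s. \<Sum>(x, y) \<in> {(x, y). x \<in> SN Omega \<and> y \<in> SN Omega \<and> y \<circ> x = s}.
                            f x * g y)"

definition T_set :: "nat \<Rightarrow> (nat \<Rightarrow> nat \<Rightarrow> nat) \<Rightarrow> (nat \<Rightarrow> nat \<Rightarrow> nat) \<Rightarrow> (nat \<Rightarrow> nat \<Rightarrow> nat)
                     \<Rightarrow> (nat \<Rightarrow> nat \<Rightarrow> nat \<Rightarrow> nat) set" where
  "T_set nu a b c = {t. (\<forall>i j k. \<not> (i < nu \<and> j < nu \<and> k < nu) \<longrightarrow> t i j k = 0) \<and>
       (\<forall>j<nu. \<forall>k<nu. (\<Sum>i<nu. t i j k) = b j k) \<and>
       (\<forall>i<nu. \<forall>k<nu. (\<Sum>j<nu. t i j k) = c i k) \<and>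
       (\<forall>i<nu. \<forall>j<nu. (\<Sum>k<nu. t i j k) = a i j)}"

end

theory Submission
  imports Defs
begin


lemma prod_adjust:
  fixes h h' :: "'b \<Rightarrow> nat"
  assumes "finite S" "x0 \<in> S" "k * h x0 = h' x0" "\<And>x. x \<in> S \<Longrightarrow> x \<noteq> x0 \<Longrightarrow> h x = h' x"
  shows "k * prod h S = prod h' S"
proof -
  have "prod h S = h x0 * prod h (S - {x0})" using assms by (simp add: prod.remove)
  moreover have "prod h' S = h' x0 * prod h' (S - {x0})" using assms by (simp add: prod.remove)
  moreover have "prod h (S - {x0}) = prod h' (S - {x0})" using assms by (intro prod.cong) auto
  ultimately show ?thesis using assms(3) by (simp add: mult.assoc)
qed

lemma prod_fact_adjust:
  fixes g :: "'b \<Rightarrow> nat"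
  assumes "finite S" "x0 \<in> S" "g x0 \<ge> 1"
  shows "g x0 * (\<Prod>y\<in>S. fact (g y - (if y = x0 then 1 else 0))) = (\<Prod>y\<in>S. (fact (g y) :: nat))"
  apply (rule prod_adjust[OF assms(1,2)])
  using assms(3) fact_reduce[of "g x0", where 'a=nat] by auto

lemma sum_adjust:
  fixes g :: "'b \<Rightarrow> nat"
  assumes "finite S" "x0 \<in> S" "g x0 \<ge> 1"
  shows "(\<Sum>y\<in>S. (g y - (if y = x0 then 1 else 0))) = (\<Sum>y\<in>S. g y) - 1"
proof -
  have "(\<Sum>y\<in>S. (g y - (if y = x0 then 1 else 0))) = (g x0 - 1) + (\<Sum>y\<in>S-{x0}. (g y - (if y = x0 then 1 else 0)))"
    using assms by (simp add: sum.remove)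
  also have "(\<Sum>y\<in>S-{x0}. (g y - (if y = x0 then 1 else 0))) = (\<Sum>y\<in>S-{x0}. g y)"
    by (intro sum.cong) auto
  also have "(\<Sum>y\<in>S. g y) = g x0 + (\<Sum>y\<in>S-{x0}. g y)" using assms by (simp add: sum.remove)
  ultimately show ?thesis using assms(3) by simp
qed

lemma finite_funs_fix:
  assumes "finite A" "finite B"
  shows "finite {f. f ` A \<subseteq> B \<and> (\<forall>x. x \<notin> A \<longrightarrow> f x = x)}"
proof -
  let ?F = "{f. f ` A \<subseteq> B \<and> (\<forall>x. x \<notin> A \<longrightarrow> f x = x)}"
  have "inj_on (\<lambda>f. restrict f A) ?F"
  proof (rule inj_onI)
    fix f g assume f: "f \<in> ?F" and g: "g \<in> ?F" and e: "restrict f A = restrict g A"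
    show "f = g"
    proof
      fix x show "f x = g x"
        using f g e by (cases "x \<in> A") (auto simp: restrict_def fun_eq_iff split: if_splits)
    qed
  qed
  moreover have "(\<lambda>f. restrict f A) ` ?F \<subseteq> PiE A (\<lambda>_. B)" by auto
  moreover have "finite (PiE A (\<lambda>_. B))" using assms by (simp add: finite_PiE)
  ultimately show ?thesis by (meson finite_imageD finite_subset)
qed

definition Fb :: "'a set \<Rightarrow> 'a set \<Rightarrow> ('a \<Rightarrow> 'l) \<Rightarrow> ('a \<Rightarrow> 'm) \<Rightarrow> 'l set \<Rightarrow> 'm set
   \<Rightarrow> ('l \<Rightarrow> 'm \<Rightarrow> nat) \<Rightarrow> ('a \<Rightarrow> 'a) set" where
  "Fb A B l m I J t = {f. bij_betw f A B \<and> (\<forall>x. x \<notin> A \<longrightarrow> f x = x) \<and>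
     (\<forall>\<alpha>\<in>I. \<forall>\<beta>\<in>J. card {x\<in>A. l x = \<alpha> \<and> m (f x) = \<beta>} = t \<alpha> \<beta>)}"

lemma finite_Fb: "finite A \<Longrightarrow> finite B \<Longrightarrow> finite (Fb A B l m I J t)"
  by (rule finite_subset[OF _ finite_funs_fix[of A B]]) (auto simp: Fb_def bij_betw_def)



lemma card_insert_filter:
  assumes "finite A" "a \<notin> A"
  shows "card {x\<in>insert a A. Q x} = card {x\<in>A. Q x} + (if Q a then 1 else 0)"
proof -
  have "{x\<in>insert a A. Q x} = (if Q a then insert a {x\<in>A. Q x} else {x\<in>A. Q x})" by auto
  then show ?thesis using assms by auto
qed

lemma Fb_count:
  assumes "finite A" "finite B" "finite I" "finite J" "l ` A \<subseteq> I" "m ` B \<subseteq> J"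
    "\<forall>\<alpha>\<in>I. (\<Sum>\<beta>\<in>J. t \<alpha> \<beta>) = card {x\<in>A. l x = \<alpha>}"
    "\<forall>\<beta>\<in>J. (\<Sum>\<alpha>\<in>I. t \<alpha> \<beta>) = card {x\<in>B. m x = \<beta>}"
  shows "card (Fb A B l m I J t) * (\<Prod>\<alpha>\<in>I. \<Prod>\<beta>\<in>J. fact (t \<alpha> \<beta>)) =
    (\<Prod>\<alpha>\<in>I. fact (card {x\<in>A. l x = \<alpha>})) * (\<Prod>\<beta>\<in>J. fact (card {x\<in>B. m x = \<beta>}))"
  using assms
proof (induction A arbitrary: B t rule: finite_induct)
  case empty
  have t0: "t \<alpha> \<beta> = 0" if "\<alpha> \<in> I" "\<beta> \<in> J" for \<alpha> \<beta>
    using empty that by auto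
  have B0: "B = {}"
  proof (rule ccontr)
    assume "B \<noteq> {}" then obtain b where b: "b \<in> B" by auto
    then have "m b \<in> J" using empty by auto
    then have "card {x\<in>B. m x = m b} = 0" using empty(7) t0 by simp
    moreover have "finite {x\<in>B. m x = m b}" using empty by auto
    ultimately show False using b by auto
  qed
  have "Fb {} B l m I J t = {id}"
  proof
    show "Fb {} B l m I J t \<subseteq> {id}" by (auto simp: Fb_def)
    show "{id} \<subseteq> Fb {} B l m I J t" using B0 t0 by (simp add: Fb_def)
  qed
  then show ?case using t0 B0 by simp
next
  case (insert a A)
  note P = insert.prems insert.hyps
  define \<alpha>0 where "\<alpha>0 = l a"
  have a0I: "\<alpha>0 \<in> I" using P by (auto simp: \<alpha>0_def)
  define tb where "tb = (\<lambda>b \<alpha> \<beta>. t \<alpha> \<beta> - (if \<alpha> = \<alpha>0 \<and> \<beta> = m b then 1 else 0))"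
  define Bp where "Bp = {b\<in>B. t \<alpha>0 (m b) > 0}"
  define G where "G = (\<lambda>b. Fb A (B - {b}) l m I J (tb b))"
  have cnt_ins: "card {x\<in>insert a A. Q x} = card {x\<in>A. Q x} + (if Q a then 1 else 0)" for Q
    by (rule card_insert_filter) (use P in auto)
  have decomp: "Fb (insert a A) B l m I J t = (\<Union>b\<in>Bp. (\<lambda>f. f(a := b)) ` G b)"
  proof
    show "Fb (insert a A) B l m I J t \<subseteq> (\<Union>b\<in>Bp. (\<lambda>f. f(a := b)) ` G b)"
    proof
      fix f assume f: "f \<in> Fb (insert a A) B l m I J t"
      then have bij: "bij_betw f (insert a A) B" and out: "\<forall>x. x \<notin> insert a A \<longrightarrow> f x = x"
        and ct: "\<forall>\<alpha>\<in>I. \<forall>\<beta>\<in>J. card {x\<in>insert a A. l x = \<alpha> \<and> m (f x) = \<beta>} = t \<alpha> \<beta>"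
        by (auto simp: Fb_def)
      define b where "b = f a"
      have bB: "b \<in> B" using bij by (auto simp: b_def bij_betw_def)
      have mbJ: "m b \<in> J" using bB P by auto
      have "t \<alpha>0 (m b) = card {x\<in>A. l x = \<alpha>0 \<and> m (f x) = m b} + 1"
        using ct[rule_format, OF a0I mbJ] cnt_ins by (simp add: \<alpha>0_def b_def)
      then have bBp: "b \<in> Bp" using bB by (simp add: Bp_def)
      define f' where "f' = f(a := a)"
      have "bij_betw f A (B - {b})"
        using bij_betw_DiffI[OF bij, of "{a}" "{b}"] insert.hyps bB by (auto simp: b_def)
      then have bij': "bij_betw f' A (B - {b})"
        by (rule bij_betw_cong[THEN iffD1, rotated]) (use insert.hyps in \<open>auto simp: f'_def\<close>)
      have "f' \<in> G b"
        unfolding G_def Fb_def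
      proof (intro CollectI conjI allI impI ballI bij')
        fix x assume "x \<notin> A" then show "f' x = x" using out by (auto simp: f'_def)
      next
        fix \<alpha> \<beta> assume \<alpha>: "\<alpha> \<in> I" and \<beta>: "\<beta> \<in> J"
        have "card {x\<in>A. l x = \<alpha> \<and> m (f' x) = \<beta>} = card {x\<in>A. l x = \<alpha> \<and> m (f x) = \<beta>}"
          using insert.hyps by (intro arg_cong[where f=card]) (auto simp: f'_def)
        also have "\<dots> = t \<alpha> \<beta> - (if \<alpha> = \<alpha>0 \<and> \<beta> = m b then 1 else 0)"
          using ct[rule_format, OF \<alpha> \<beta>] cnt_ins[of "\<lambda>x. l x = \<alpha> \<and> m (f x) = \<beta>"]
          by (auto simp: \<alpha>0_def b_def)
        finally show "card {x\<in>A. l x = \<alpha> \<and> m (f' x) = \<beta>} = tb b \<alpha> \<beta>" by (simp add: tb_def)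
      qed
      moreover have "f = f'(a := b)" by (auto simp: f'_def b_def)
      ultimately show "f \<in> (\<Union>b\<in>Bp. (\<lambda>f. f(a := b)) ` G b)" using bBp by blast
    qed
  next
    show "(\<Union>b\<in>Bp. (\<lambda>f. f(a := b)) ` G b) \<subseteq> Fb (insert a A) B l m I J t"
    proof clarify
      fix b f' assume bBp: "b \<in> Bp" and f': "f' \<in> G b"
      have bB: "b \<in> B" and tpos: "t \<alpha>0 (m b) > 0" using bBp by (auto simp: Bp_def)
      from f' have bij': "bij_betw f' A (B - {b})" and out: "\<forall>x. x \<notin> A \<longrightarrow> f' x = x"
        and ct: "\<forall>\<alpha>\<in>I. \<forall>\<beta>\<in>J. card {x\<in>A. l x = \<alpha> \<and> m (f' x) = \<beta>} = tb b \<alpha> \<beta>"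
        by (auto simp: G_def Fb_def)
      let ?f = "f'(a := b)"
      have "bij_betw ?f A (B - {b})"
        by (rule bij_betw_cong[THEN iffD1, OF _ bij']) (use insert.hyps in auto)
      moreover have "bij_betw ?f {a} {b}" by auto
      ultimately have "bij_betw ?f (A \<union> {a}) ((B - {b}) \<union> {b})"
        by (intro bij_betw_combine) auto
      then have bij: "bij_betw ?f (insert a A) B" using bB
        by (metis Un_insert_right insert_Diff sup_bot.right_neutral)
      show "?f \<in> Fb (insert a A) B l m I J t"
        unfolding Fb_def
      proof (intro CollectI conjI allI impI ballI bij)
        fix x assume "x \<notin> insert a A" then show "?f x = x" using out by auto
      next
        fix \<alpha> \<beta> assume \<alpha>: "\<alpha> \<in> I" and \<beta>: "\<beta> \<in> J"
        have "card {x\<in>insert a A. l x = \<alpha> \<and> m (?f x) = \<beta>} =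
              card {x\<in>A. l x = \<alpha> \<and> m (?f x) = \<beta>} + (if l a = \<alpha> \<and> m b = \<beta> then 1 else 0)"
          using cnt_ins[of "\<lambda>x. l x = \<alpha> \<and> m (?f x) = \<beta>"] by simp
        also have "card {x\<in>A. l x = \<alpha> \<and> m (?f x) = \<beta>} = card {x\<in>A. l x = \<alpha> \<and> m (f' x) = \<beta>}"
          using insert.hyps by (intro arg_cong[where f=card]) auto
        also have "\<dots> = tb b \<alpha> \<beta>" using ct \<alpha> \<beta> by auto
        finally show "card {x\<in>insert a A. l x = \<alpha> \<and> m (?f x) = \<beta>} = t \<alpha> \<beta>"
          using tpos by (auto simp: tb_def \<alpha>0_def)
      qed
    qed
  qed
  have finG: "finite (G b)" for b using P by (simp add: G_def finite_Fb)
  have injupd: "inj_on (\<lambda>f. f(a := b)) (G b)" for b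
  proof (rule inj_onI)
    fix f g assume "f \<in> G b" "g \<in> G b" "f(a := b) = g(a := b)"
    moreover have "f a = a" "g a = a" using \<open>f \<in> G b\<close> \<open>g \<in> G b\<close> insert.hyps
      by (auto simp: G_def Fb_def)
    ultimately show "f = g" by (metis fun_upd_triv fun_upd_upd)
  qed
  have cardF: "card (Fb (insert a A) B l m I J t) = (\<Sum>b\<in>Bp. card (G b))"
    unfolding decomp
  proof (subst card_UN_disjoint)
    show "finite Bp" using P by (simp add: Bp_def)
    show "\<forall>b\<in>Bp. finite ((\<lambda>f. f(a := b)) ` G b)" using finG by blast
    show "\<forall>i\<in>Bp. \<forall>j\<in>Bp. i \<noteq> j \<longrightarrow> (\<lambda>f. f(a := i)) ` G i \<inter> (\<lambda>f. f(a := j)) ` G j = {}"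
    proof (intro ballI impI)
      fix i j assume "i \<in> Bp" "j \<in> Bp" "i \<noteq> j"
      show "(\<lambda>f. f(a := i)) ` G i \<inter> (\<lambda>f. f(a := j)) ` G j = {}"
      proof (rule ccontr)
        assume "(\<lambda>f. f(a := i)) ` G i \<inter> (\<lambda>f. f(a := j)) ` G j \<noteq> {}"
        then obtain f g where "f(a := i) = g(a := j)" by blast
        then have "(f(a := i)) a = (g(a := j)) a" by simp
        then show False using \<open>i \<noteq> j\<close> by simp
      qed
    qed
    show "(\<Sum>b\<in>Bp. card ((\<lambda>f. f(a := b)) ` G b)) = (\<Sum>b\<in>Bp. card (G b))"
      by (intro sum.cong refl card_image injupd)
  qed
  define p where "p = (\<lambda>\<alpha>. card {x\<in>A. l x = \<alpha>})"
  define q where "q = (\<lambda>\<beta>. card {x\<in>B. m x = \<beta>})"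
  define R where "R = (\<lambda>\<beta>0. \<Prod>\<beta>\<in>J. (fact (q \<beta> - (if \<beta> = \<beta>0 then 1 else 0)) :: nat))"
  have cardB': "card {x\<in>B - {b}. m x = \<beta>} = q \<beta> - (if \<beta> = m b then 1 else 0)" if "b \<in> B" for b \<beta>
  proof -
    have "{x\<in>B - {b}. m x = \<beta>} = {x\<in>B. m x = \<beta>} - {b}" by auto
    then show ?thesis using that P by (auto simp: q_def)
  qed
  have qpos: "q (m b) \<ge> 1" if "b \<in> B" for b
  proof -
    have "finite {x\<in>B. m x = m b}" "b \<in> {x\<in>B. m x = m b}" using that P by auto
    then show ?thesis unfolding q_def by (metis One_nat_def Suc_leI card_gt_0_iff empty_iff)
  qed
  have step: "card (G b) * (\<Prod>\<alpha>\<in>I. \<Prod>\<beta>\<in>J. fact (tb b \<alpha> \<beta>)) =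
     (\<Prod>\<alpha>\<in>I. fact (p \<alpha>)) * R (m b)" if bBp: "b \<in> Bp" for b
  proof -
    have bB: "b \<in> B" and tpos: "t \<alpha>0 (m b) > 0" using bBp by (auto simp: Bp_def)
    have mbJ: "m b \<in> J" using bB P by auto
    have "card (G b) * (\<Prod>\<alpha>\<in>I. \<Prod>\<beta>\<in>J. fact (tb b \<alpha> \<beta>)) =
      (\<Prod>\<alpha>\<in>I. fact (card {x\<in>A. l x = \<alpha>})) * (\<Prod>\<beta>\<in>J. fact (card {x\<in>B - {b}. m x = \<beta>}))"
      unfolding G_def
    proof (rule insert.IH)
      show "finite (B - {b})" "finite I" "finite J" "l ` A \<subseteq> I" "m ` (B - {b}) \<subseteq> J"
        using P by auto
      show "\<forall>\<alpha>\<in>I. (\<Sum>\<beta>\<in>J. tb b \<alpha> \<beta>) = card {x\<in>A. l x = \<alpha>}"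
      proof
        fix \<alpha> assume \<alpha>: "\<alpha> \<in> I"
        have h: "(\<Sum>\<beta>\<in>J. t \<alpha> \<beta>) = card {x\<in>A. l x = \<alpha>} + (if \<alpha> = \<alpha>0 then 1 else 0)"
          using insert.prems(6) \<alpha> cnt_ins[of "\<lambda>x. l x = \<alpha>"] by (auto simp: \<alpha>0_def)
        show "(\<Sum>\<beta>\<in>J. tb b \<alpha> \<beta>) = card {x\<in>A. l x = \<alpha>}"
        proof (cases "\<alpha> = \<alpha>0")
          case True
          then show ?thesis unfolding tb_def using sum_adjust[OF \<open>finite J\<close> mbJ, of "t \<alpha>0"] tpos h
            by simp
        next
          case False
          then show ?thesis unfolding tb_def using h by simp
        qed
      qed
      show "\<forall>\<beta>\<in>J. (\<Sum>\<alpha>\<in>I. tb b \<alpha> \<beta>) = card {x\<in>B - {b}. m x = \<beta>}"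
      proof
        fix \<beta> assume \<beta>: "\<beta> \<in> J"
        have h: "(\<Sum>\<alpha>\<in>I. t \<alpha> \<beta>) = q \<beta>" using insert.prems(7) \<beta> by (auto simp: q_def)
        show "(\<Sum>\<alpha>\<in>I. tb b \<alpha> \<beta>) = card {x\<in>B - {b}. m x = \<beta>}"
        proof (cases "\<beta> = m b")
          case True
          have "(\<Sum>\<alpha>\<in>I. tb b \<alpha> \<beta>) = (\<Sum>\<alpha>\<in>I. (t \<alpha> \<beta> - (if \<alpha> = \<alpha>0 then 1 else 0)))"
            unfolding tb_def using True by (intro sum.cong) auto
          also have "\<dots> = q \<beta> - 1"
            using sum_adjust[OF \<open>finite I\<close> a0I, of "\<lambda>\<alpha>. t \<alpha> \<beta>"] tpos h True by simp
          finally show ?thesis using cardB'[OF bB] True by simp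
        next
          case False
          then show ?thesis unfolding tb_def using h cardB'[OF bB] by simp
        qed
      qed
    qed
    then show ?thesis using cardB'[OF bB] by (simp add: p_def R_def)
  qed
  have tfact: "t \<alpha>0 (m b) * (\<Prod>\<alpha>\<in>I. \<Prod>\<beta>\<in>J. fact (tb b \<alpha> \<beta>)) = (\<Prod>\<alpha>\<in>I. \<Prod>\<beta>\<in>J. (fact (t \<alpha> \<beta>) :: nat))"
    if bBp: "b \<in> Bp" for b
  proof -
    have bB: "b \<in> B" and tpos: "t \<alpha>0 (m b) > 0" using bBp by (auto simp: Bp_def)
    have mbJ: "m b \<in> J" using bB P by auto
    show ?thesis
    proof (rule prod_adjust[OF \<open>finite I\<close> a0I])
      show "t \<alpha>0 (m b) * (\<Prod>\<beta>\<in>J. fact (tb b \<alpha>0 \<beta>)) = (\<Prod>\<beta>\<in>J. fact (t \<alpha>0 \<beta>))"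
        unfolding tb_def using prod_fact_adjust[OF \<open>finite J\<close> mbJ, of "t \<alpha>0"] tpos by simp
      show "\<And>x. x \<in> I \<Longrightarrow> x \<noteq> \<alpha>0 \<Longrightarrow> (\<Prod>\<beta>\<in>J. fact (tb b x \<beta>)) = (\<Prod>\<beta>\<in>J. fact (t x \<beta>))"
        unfolding tb_def by simp
    qed
  qed
  have qR: "q \<beta> * R \<beta> = (\<Prod>\<beta>\<in>J. fact (q \<beta>))" if "\<beta> \<in> J" "q \<beta> \<ge> 1" for \<beta>
    unfolding R_def using prod_fact_adjust[OF \<open>finite J\<close> that(1), of q] that by simp
  have tq0: "t \<alpha>0 \<beta> = 0" if "\<beta> \<in> J" "q \<beta> = 0" for \<beta>
  proof -
    have "(\<Sum>\<alpha>\<in>I. t \<alpha> \<beta>) = 0" using insert.prems(7) that by (auto simp: q_def)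
    then show ?thesis using a0I \<open>finite I\<close> by simp
  qed
  have "card (Fb (insert a A) B l m I J t) * (\<Prod>\<alpha>\<in>I. \<Prod>\<beta>\<in>J. fact (t \<alpha> \<beta>))
      = (\<Sum>b\<in>Bp. card (G b) * (t \<alpha>0 (m b) * (\<Prod>\<alpha>\<in>I. \<Prod>\<beta>\<in>J. fact (tb b \<alpha> \<beta>))))"
    unfolding cardF sum_distrib_right by (intro sum.cong) (auto simp: tfact)
  also have "\<dots> = (\<Sum>b\<in>Bp. t \<alpha>0 (m b) * ((\<Prod>\<alpha>\<in>I. fact (p \<alpha>)) * R (m b)))"
  proof (intro sum.cong refl)
    fix b assume b: "b \<in> Bp"
    have "card (G b) * (t \<alpha>0 (m b) * (\<Prod>\<alpha>\<in>I. \<Prod>\<beta>\<in>J. fact (tb b \<alpha> \<beta>))) =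
      t \<alpha>0 (m b) * (card (G b) * (\<Prod>\<alpha>\<in>I. \<Prod>\<beta>\<in>J. fact (tb b \<alpha> \<beta>)))"
      by (rule mult.left_commute)
    also have "\<dots> = t \<alpha>0 (m b) * ((\<Prod>\<alpha>\<in>I. fact (p \<alpha>)) * R (m b))" by (simp only: step[OF b])
    finally show "card (G b) * (t \<alpha>0 (m b) * (\<Prod>\<alpha>\<in>I. \<Prod>\<beta>\<in>J. fact (tb b \<alpha> \<beta>))) =
      t \<alpha>0 (m b) * ((\<Prod>\<alpha>\<in>I. fact (p \<alpha>)) * R (m b))" .
  qed
  also have "\<dots> = (\<Sum>b\<in>B. t \<alpha>0 (m b) * ((\<Prod>\<alpha>\<in>I. fact (p \<alpha>)) * R (m b)))"
    unfolding Bp_def by (rule sum.mono_neutral_left) (use P in auto)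
  also have "\<dots> = (\<Sum>\<beta>\<in>J. (\<Sum>b\<in>{x\<in>B. m x = \<beta>}. t \<alpha>0 (m b) * ((\<Prod>\<alpha>\<in>I. fact (p \<alpha>)) * R (m b))))"
    by (rule sum.group[symmetric]) (use P in auto)
  also have "\<dots> = (\<Sum>\<beta>\<in>J. q \<beta> * (t \<alpha>0 \<beta> * ((\<Prod>\<alpha>\<in>I. fact (p \<alpha>)) * R \<beta>)))"
    by (intro sum.cong refl) (simp add: q_def)
  also have "\<dots> = (\<Sum>\<beta>\<in>J. t \<alpha>0 \<beta> * ((\<Prod>\<alpha>\<in>I. fact (p \<alpha>)) * (\<Prod>\<beta>\<in>J. fact (q \<beta>))))"
  proof (intro sum.cong refl)
    fix \<beta> assume \<beta>: "\<beta> \<in> J"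
    show "q \<beta> * (t \<alpha>0 \<beta> * ((\<Prod>\<alpha>\<in>I. fact (p \<alpha>)) * R \<beta>)) = t \<alpha>0 \<beta> * ((\<Prod>\<alpha>\<in>I. fact (p \<alpha>)) * (\<Prod>\<beta>\<in>J. fact (q \<beta>)))"
    proof (cases "q \<beta> = 0")
      case True then show ?thesis using tq0 \<beta> by simp
    next
      case False
      then have "q \<beta> * R \<beta> = (\<Prod>\<beta>\<in>J. fact (q \<beta>))" using qR \<beta> by simp
      then show ?thesis by (metis mult.left_commute)
    qed
  qed
  also have "\<dots> = (\<Sum>\<beta>\<in>J. t \<alpha>0 \<beta>) * ((\<Prod>\<alpha>\<in>I. fact (p \<alpha>)) * (\<Prod>\<beta>\<in>J. fact (q \<beta>)))"
    by (simp add: sum_distrib_right)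
  also have "(\<Sum>\<beta>\<in>J. t \<alpha>0 \<beta>) = p \<alpha>0 + 1"
    using insert.prems(6) a0I cnt_ins[of "\<lambda>x. l x = \<alpha>0"] by (simp add: p_def \<alpha>0_def)
  also have "(p \<alpha>0 + 1) * ((\<Prod>\<alpha>\<in>I. fact (p \<alpha>)) * (\<Prod>\<beta>\<in>J. fact (q \<beta>))) =
     (\<Prod>\<alpha>\<in>I. fact (card {x\<in>insert a A. l x = \<alpha>})) * (\<Prod>\<beta>\<in>J. fact (q \<beta>))"
  proof -
    have "(p \<alpha>0 + 1) * (\<Prod>\<alpha>\<in>I. fact (p \<alpha>)) = (\<Prod>\<alpha>\<in>I. (fact (card {x\<in>insert a A. l x = \<alpha>}) :: nat))"
    proof (rule prod_adjust[OF \<open>finite I\<close> a0I])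
      show "(p \<alpha>0 + 1) * fact (p \<alpha>0) = fact (card {x\<in>insert a A. l x = \<alpha>0})"
        using cnt_ins[of "\<lambda>x. l x = \<alpha>0"] by (simp add: p_def \<alpha>0_def)
      show "\<And>x. x \<in> I \<Longrightarrow> x \<noteq> \<alpha>0 \<Longrightarrow> fact (p x) = fact (card {xa \<in> insert a A. l xa = x})"
        using cnt_ins by (simp add: p_def \<alpha>0_def)
    qed
    then show ?thesis by (metis mult.assoc)
  qed
  finally show ?case by (simp add: q_def)
qed



lemma finite_bounded2:
  "finite {c :: nat \<Rightarrow> nat \<Rightarrow> nat. (\<forall>i j. c i j \<le> M) \<and> (\<forall>i j. \<not> (i < nu \<and> j < nu) \<longrightarrow> c i j = 0)}"
proof -
  let ?S = "{c :: nat \<Rightarrow> nat \<Rightarrow> nat. (\<forall>i j. c i j \<le> M) \<and> (\<forall>i j. \<not> (i < nu \<and> j < nu) \<longrightarrow> c i j = 0)}"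
  let ?f = "\<lambda>h i j. if i < nu \<and> j < nu then h (i, j) else (0::nat)"
  have "?S \<subseteq> ?f ` PiE ({..<nu} \<times> {..<nu}) (\<lambda>_. {..M})"
  proof
    fix c assume c: "c \<in> ?S"
    have "c = ?f (restrict (\<lambda>(i, j). c i j) ({..<nu} \<times> {..<nu}))"
      using c by (auto simp: fun_eq_iff)
    moreover have "restrict (\<lambda>(i, j). c i j) ({..<nu} \<times> {..<nu}) \<in> PiE ({..<nu} \<times> {..<nu}) (\<lambda>_. {..M})"
      using c by auto
    ultimately show "c \<in> ?f ` PiE ({..<nu} \<times> {..<nu}) (\<lambda>_. {..M})" by blast
  qed
  then show ?thesis by (rule finite_subset) (simp add: finite_PiE)
qed

lemma finite_bounded3:
  "finite {c :: nat \<Rightarrow> nat \<Rightarrow> nat \<Rightarrow> nat. (\<forall>i j k. c i j k \<le> M) \<and>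
      (\<forall>i j k. \<not> (i < nu \<and> j < nu \<and> k < nu) \<longrightarrow> c i j k = 0)}"
proof -
  let ?S = "{c :: nat \<Rightarrow> nat \<Rightarrow> nat \<Rightarrow> nat. (\<forall>i j k. c i j k \<le> M) \<and>
      (\<forall>i j k. \<not> (i < nu \<and> j < nu \<and> k < nu) \<longrightarrow> c i j k = 0)}"
  let ?f = "\<lambda>h i j k. if i < nu \<and> j < nu \<and> k < nu then h (i, j, k) else (0::nat)"
  let ?D = "{..<nu} \<times> {..<nu} \<times> {..<nu}"
  have "?S \<subseteq> ?f ` PiE ?D (\<lambda>_. {..M})"
  proof
    fix c assume c: "c \<in> ?S"
    have "c = ?f (restrict (\<lambda>(i, j, k). c i j k) ?D)"
      using c by (auto simp: fun_eq_iff)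
    moreover have "restrict (\<lambda>(i, j, k). c i j k) ?D \<in> PiE ?D (\<lambda>_. {..M})"
      using c by auto
    ultimately show "c \<in> ?f ` PiE ?D (\<lambda>_. {..M})" by blast
  qed
  then show ?thesis by (rule finite_subset) (simp add: finite_PiE)
qed

lemma finite_adm_set: "finite (adm_set nu n)"
proof (rule finite_subset[OF _ finite_bounded2[of "\<Sum>i<nu. n i" nu]])
  show "adm_set nu n \<subseteq> {c. (\<forall>i j. c i j \<le> (\<Sum>i<nu. n i)) \<and> (\<forall>i j. \<not> (i < nu \<and> j < nu) \<longrightarrow> c i j = 0)}"
  proof clarify
    fix c assume c: "c \<in> adm_set nu n"
    show "(\<forall>i j. c i j \<le> (\<Sum>i<nu. n i)) \<and> (\<forall>i j. \<not> (i < nu \<and> j < nu) \<longrightarrow> c i j = 0)"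
    proof (intro conjI allI impI)
      fix i j
      show "c i j \<le> (\<Sum>i<nu. n i)"
      proof (cases "i < nu \<and> j < nu")
        case True
        have "c i j \<le> (\<Sum>j<nu. c i j)" using True by (intro member_le_sum) auto
        also have "\<dots> = n i" using c True by (auto simp: adm_set_def admissible_def)
        also have "\<dots> \<le> (\<Sum>i<nu. n i)" using True by (intro member_le_sum) auto
        finally show ?thesis .
      next
        case False then show ?thesis using c by (auto simp: adm_set_def)
      qed
    qed (use c in \<open>auto simp: adm_set_def\<close>)
  qed
qed

lemma finite_T_set: "finite (T_set nu a b c)"
proof (rule finite_subset[OF _ finite_bounded3[of "\<Sum>i<nu. \<Sum>j<nu. a i j" nu]])
  show "T_set nu a b c \<subseteq> {t. (\<forall>i j k. t i j k \<le> (\<Sum>i<nu. \<Sum>j<nu. a i j)) \<and>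
      (\<forall>i j k. \<not> (i < nu \<and> j < nu \<and> k < nu) \<longrightarrow> t i j k = 0)}"
  proof clarify
    fix t assume t: "t \<in> T_set nu a b c"
    show "(\<forall>i j k. t i j k \<le> (\<Sum>i<nu. \<Sum>j<nu. a i j)) \<and>
      (\<forall>i j k. \<not> (i < nu \<and> j < nu \<and> k < nu) \<longrightarrow> t i j k = 0)"
    proof (intro conjI allI impI)
      fix i j k
      show "t i j k \<le> (\<Sum>i<nu. \<Sum>j<nu. a i j)"
      proof (cases "i < nu \<and> j < nu \<and> k < nu")
        case True
        have "t i j k \<le> (\<Sum>k<nu. t i j k)" using True by (intro member_le_sum) auto
        also have "\<dots> = a i j" using t True by (auto simp: T_set_def)
        also have "\<dots> \<le> (\<Sum>j<nu. a i j)" using True by (intro member_le_sum) auto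
        also have "\<dots> \<le> (\<Sum>i<nu. \<Sum>j<nu. a i j)" using True by (intro member_le_sum) auto
        finally show ?thesis .
      next
        case False then show ?thesis using t by (auto simp: T_set_def)
      qed
    qed (use t in \<open>auto simp: T_set_def\<close>)
  qed
qed



lemma prod_pair: "(\<Prod>\<alpha>\<in>A \<times> B. G \<alpha>) = (\<Prod>i\<in>A. \<Prod>k\<in>B. G (i, k))"
  by (simp add: prod.cartesian_product)

locale yset =
  fixes Omega :: "'a set" and nu :: nat and n :: "nat \<Rightarrow> nat" and P :: "nat \<Rightarrow> 'a set"
  assumes fin: "finite Omega"
    and Psub: "\<forall>j<nu. P j \<subseteq> Omega"
    and Pun: "(\<Union>j<nu. P j) = Omega"
    and Pdis: "\<forall>i<nu. \<forall>j<nu. i \<noteq> j \<longrightarrow> P i \<inter> P j = {}"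
    and Pcard: "\<forall>j<nu. card (P j) = n j"
begin

definition idx :: "'a \<Rightarrow> nat" where "idx w = (THE i. i < nu \<and> w \<in> P i)"

lemma idx_eq: "i < nu \<Longrightarrow> w \<in> P i \<Longrightarrow> idx w = i"
  unfolding idx_def using Pdis by (intro the_equality) blast+

lemma idx: "w \<in> Omega \<Longrightarrow> idx w < nu \<and> w \<in> P (idx w)"
proof -
  assume "w \<in> Omega"
  then obtain i where "i < nu" "w \<in> P i" using Pun by auto
  then show ?thesis using idx_eq by auto
qed

lemma Pfin: "j < nu \<Longrightarrow> finite (P j)"
  using Psub fin finite_subset by blast

lemma card_split:
  assumes "finite S" "\<forall>w\<in>S. g w \<in> Omega"
  shows "card S = (\<Sum>k<nu. card {w\<in>S. g w \<in> P k})"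
proof -
  have "S = (\<Union>k<nu. {w\<in>S. g w \<in> P k})" using assms Pun by auto
  then have "card S = card (\<Union>k<nu. {w\<in>S. g w \<in> P k})" by simp
  also have "\<dots> = (\<Sum>k<nu. card {w\<in>S. g w \<in> P k})"
    by (rule card_UN_disjoint) (use assms Pdis in auto)
  finally show ?thesis .
qed

lemma card_img:
  assumes "inj_on g Omega" "S \<subseteq> Omega"
  shows "card (g ` S \<inter> T) = card {w\<in>S. g w \<in> T}"
proof -
  have "g ` S \<inter> T = g ` {w\<in>S. g w \<in> T}" by auto
  moreover have "{w\<in>S. g w \<in> T} \<subseteq> Omega" using assms by auto
  then have "inj_on g {w\<in>S. g w \<in> T}" by (rule inj_on_subset[OF assms(1)])
  ultimately show ?thesis by (simp add: card_image)
qed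

lemma P_idx: "j < nu \<Longrightarrow> {w\<in>Omega. idx w = j} = P j"
  using idx idx_eq Psub by blast

definition jtype :: "('a \<Rightarrow> 'a) \<Rightarrow> ('a \<Rightarrow> 'a) \<Rightarrow> nat \<Rightarrow> nat \<Rightarrow> nat \<Rightarrow> nat" where
  "jtype s x = (\<lambda>i j k. if i < nu \<and> j < nu \<and> k < nu then card {w\<in>P i. x w \<in> P j \<and> s w \<in> P k} else 0)"

definition ctype :: "('a \<Rightarrow> 'a) \<Rightarrow> nat \<Rightarrow> nat \<Rightarrow> nat" where
  "ctype s = (\<lambda>i k. if i < nu \<and> k < nu then card (s ` P i \<inter> P k) else 0)"

lemma sum_j_typ:
  assumes s: "s permutes Omega" and x: "x permutes Omega" and ik: "i < nu" "k < nu"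
  shows "(\<Sum>j<nu. jtype s x i j k) = ctype s i k"
proof -
  let ?S = "{w\<in>P i. s w \<in> P k}"
  have "card ?S = (\<Sum>j<nu. card {w\<in>?S. x w \<in> P j})"
    by (rule card_split) (use Pfin[OF ik(1)] Psub ik x permutes_in_image[OF x] in auto)
  also have "\<dots> = (\<Sum>j<nu. jtype s x i j k)"
    unfolding jtype_def using ik by (intro sum.cong) (auto intro!: arg_cong[where f=card])
  finally have "(\<Sum>j<nu. jtype s x i j k) = card ?S" by simp
  also have "card ?S = card (s ` P i \<inter> P k)"
    by (rule card_img[symmetric]) (use permutes_inj_on[OF s] Psub ik in auto)
  finally show ?thesis using ik by (simp add: ctype_def)
qed

lemma sum_k_typ:
  assumes s: "s permutes Omega" and x: "x permutes Omega" and ij: "i < nu" "j < nu"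
  shows "(\<Sum>k<nu. jtype s x i j k) = card (x ` P i \<inter> P j)"
proof -
  let ?S = "{w\<in>P i. x w \<in> P j}"
  have "card ?S = (\<Sum>k<nu. card {w\<in>?S. s w \<in> P k})"
    by (rule card_split) (use Pfin[OF ij(1)] Psub ij s permutes_in_image[OF s] in auto)
  also have "\<dots> = (\<Sum>k<nu. jtype s x i j k)"
    unfolding jtype_def using ij by (intro sum.cong) (auto intro!: arg_cong[where f=card])
  finally have "(\<Sum>k<nu. jtype s x i j k) = card ?S" by simp
  also have "card ?S = card (x ` P i \<inter> P j)"
    by (rule card_img[symmetric]) (use permutes_inj_on[OF x] Psub ij in auto)
  finally show ?thesis .
qed

lemma sum_i_typ:
  assumes s: "s permutes Omega" and x: "x permutes Omega" and jk: "j < nu" "k < nu"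
  shows "(\<Sum>i<nu. jtype s x i j k) = card ((s \<circ> inv x) ` P j \<inter> P k)"
proof -
  let ?S = "{w\<in>Omega. x w \<in> P j \<and> s w \<in> P k}"
  have "card ?S = (\<Sum>i<nu. card {w\<in>?S. id w \<in> P i})"
    by (rule card_split) (use fin in auto)
  also have "\<dots> = (\<Sum>i<nu. jtype s x i j k)"
    unfolding jtype_def using jk Psub by (intro sum.cong) (auto intro!: arg_cong[where f=card])
  finally have 1: "(\<Sum>i<nu. jtype s x i j k) = card ?S" by simp
  have ix: "inv x permutes Omega" using x by (rule permutes_inv)
  have "(s \<circ> inv x) ` P j = s ` (inv x ` P j)" by (simp add: image_comp)
  moreover have "inv x ` P j \<subseteq> Omega" using Psub jk permutes_image[OF ix] by blast
  ultimately have "card ((s \<circ> inv x) ` P j \<inter> P k) = card {w\<in>inv x ` P j. s w \<in> P k}"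
    using card_img[OF permutes_inj_on[OF s], of "inv x ` P j" "P k"] by simp
  also have "{w\<in>inv x ` P j. s w \<in> P k} = ?S"
  proof (intro set_eqI iffI)
    fix w assume "w \<in> {w\<in>inv x ` P j. s w \<in> P k}"
    then obtain v where v: "v \<in> P j" "w = inv x v" "s w \<in> P k" by auto
    then have "x w = v" using permutes_inverses[OF x] by simp
    moreover have "w \<in> Omega" using v permutes_in_image[OF ix] Psub jk by auto
    ultimately show "w \<in> ?S" using v by auto
  next
    fix w assume "w \<in> ?S"
    then have "w = inv x (x w)" "x w \<in> P j" "s w \<in> P k" using permutes_inverses[OF x] by auto
    then show "w \<in> {w\<in>inv x ` P j. s w \<in> P k}" by (metis (no_types, lifting) image_eqI mem_Collect_eq)
  qed
  finally show ?thesis using 1 by simp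
qed

lemma X_char:
  assumes s: "s \<in> SN Omega"
  shows "(x \<in> xi Omega nu P a \<and> s \<circ> inv x \<in> xi Omega nu P b) \<longleftrightarrow>
    (x \<in> SN Omega \<and> jtype s x \<in> T_set nu a b (ctype s))"
proof (cases "x \<in> SN Omega")
  case False then show ?thesis by (simp add: xi_def)
next
  case True
  have sp: "s permutes Omega" and xp: "x permutes Omega" using s True by (auto simp: SN_def)
  have sx: "s \<circ> inv x \<in> SN Omega"
    using permutes_compose[OF permutes_inv[OF xp] sp] by (simp add: SN_def)
  have "x \<in> xi Omega nu P a \<longleftrightarrow> (\<forall>i<nu. \<forall>j<nu. (\<Sum>k<nu. jtype s x i j k) = a i j)"
    using True sum_k_typ[OF sp xp] by (simp add: xi_def)
  moreover have "s \<circ> inv x \<in> xi Omega nu P b \<longleftrightarrow> (\<forall>j<nu. \<forall>k<nu. (\<Sum>i<nu. jtype s x i j k) = b j k)"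
    using sx sum_i_typ[OF sp xp] by (simp add: xi_def)
  moreover have "\<forall>i<nu. \<forall>k<nu. (\<Sum>j<nu. jtype s x i j k) = ctype s i k"
    using sum_j_typ[OF sp xp] by simp
  moreover have "\<forall>i j k. \<not> (i < nu \<and> j < nu \<and> k < nu) \<longrightarrow> jtype s x i j k = 0"
    by (simp add: jtype_def)
  ultimately show ?thesis using True unfolding T_set_def by blast
qed

lemma set_ijk:
  assumes s: "s permutes Omega" and x: "x permutes Omega" and ijk: "i < nu" "j < nu" "k < nu"
  shows "{w\<in>Omega. (idx w, idx (s w)) = (i, k) \<and> idx (x w) = j} = {w\<in>P i. x w \<in> P j \<and> s w \<in> P k}"
proof (intro set_eqI iffI)
  fix w assume w: "w \<in> {w\<in>Omega. (idx w, idx (s w)) = (i, k) \<and> idx (x w) = j}"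
  then have "w \<in> Omega" "s w \<in> Omega" "x w \<in> Omega"
    using permutes_in_image[OF s] permutes_in_image[OF x] by auto
  then show "w \<in> {w\<in>P i. x w \<in> P j \<and> s w \<in> P k}" using w idx by fastforce
next
  fix w assume w: "w \<in> {w\<in>P i. x w \<in> P j \<and> s w \<in> P k}"
  then have "w \<in> Omega" using Psub ijk by auto
  then show "w \<in> {w\<in>Omega. (idx w, idx (s w)) = (i, k) \<and> idx (x w) = j}"
    using w idx_eq ijk by auto
qed

lemma set_ik:
  assumes s: "s permutes Omega" and ik: "i < nu" "k < nu"
  shows "{w\<in>Omega. (idx w, idx (s w)) = (i, k)} = {w\<in>P i. s w \<in> P k}"
proof (intro set_eqI iffI)
  fix w assume w: "w \<in> {w\<in>Omega. (idx w, idx (s w)) = (i, k)}"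
  then have "w \<in> Omega" "s w \<in> Omega" using permutes_in_image[OF s] by auto
  then show "w \<in> {w\<in>P i. s w \<in> P k}" using w idx by fastforce
next
  fix w assume w: "w \<in> {w\<in>P i. s w \<in> P k}"
  then have "w \<in> Omega" using Psub ik by auto
  then show "w \<in> {w\<in>Omega. (idx w, idx (s w)) = (i, k)}"
    using w idx_eq ik by auto
qed

lemma ctype_card:
  assumes s: "s permutes Omega" and ik: "i < nu" "k < nu"
  shows "ctype s i k = card {w\<in>P i. s w \<in> P k}"
  using card_img[OF permutes_inj_on[OF s], of "P i" "P k"] Psub ik by (simp add: ctype_def)

lemma count_fixed_type:
  assumes s: "s \<in> SN Omega" and b: "admissible nu n b" and t: "t \<in> T_set nu a b (ctype s)"
  shows "real (card {x\<in>SN Omega. jtype s x = t}) =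
     real ((\<Prod>i<nu. \<Prod>k<nu. fact (ctype s i k)) * (\<Prod>j<nu. fact (n j))) /
     real (\<Prod>i<nu. \<Prod>j<nu. \<Prod>k<nu. fact (t i j k))"
proof -
  have sp: "s permutes Omega" using s by (simp add: SN_def)
  define l where "l = (\<lambda>w. (idx w, idx (s w)))"
  define I where "I = {..<nu} \<times> {..<nu}"
  define J where "J = {..<nu}"
  define t' where "t' = (\<lambda>(i, k) j. t i j k)"
  have tz: "\<forall>i j k. \<not> (i < nu \<and> j < nu \<and> k < nu) \<longrightarrow> t i j k = 0"
    and tj: "\<forall>i<nu. \<forall>k<nu. (\<Sum>j<nu. t i j k) = ctype s i k"
    and ti: "\<forall>j<nu. \<forall>k<nu. (\<Sum>i<nu. t i j k) = b j k"
    using t by (auto simp: T_set_def)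
  have eq: "{x\<in>SN Omega. jtype s x = t} = Fb Omega Omega l idx I J t'"
  proof (intro set_eqI iffI)
    fix x assume "x \<in> {x\<in>SN Omega. jtype s x = t}"
    then have xp: "x permutes Omega" and jt: "jtype s x = t" by (auto simp: SN_def)
    show "x \<in> Fb Omega Omega l idx I J t'"
      unfolding Fb_def
    proof (intro CollectI conjI allI impI ballI)
      show "bij_betw x Omega Omega" by (rule permutes_imp_bij[OF xp])
      show "\<And>y. y \<notin> Omega \<Longrightarrow> x y = y" by (rule permutes_not_in[OF xp])
      fix \<alpha> \<beta> assume "\<alpha> \<in> I" "\<beta> \<in> J"
      then obtain i k where ik: "\<alpha> = (i, k)" "i < nu" "k < nu" and j: "\<beta> < nu" by (auto simp: I_def J_def)
      show "card {w\<in>Omega. l w = \<alpha> \<and> idx (x w) = \<beta>} = t' \<alpha> \<beta>"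
        using set_ijk[OF sp xp ik(2) j ik(3)] jt ik j
        by (simp add: l_def t'_def jtype_def fun_eq_iff split: if_splits)
    qed
  next
    fix x assume "x \<in> Fb Omega Omega l idx I J t'"
    then have bx: "bij_betw x Omega Omega" and ox: "\<And>y. y \<notin> Omega \<Longrightarrow> x y = y"
      and cx: "\<forall>\<alpha>\<in>I. \<forall>\<beta>\<in>J. card {w\<in>Omega. l w = \<alpha> \<and> idx (x w) = \<beta>} = t' \<alpha> \<beta>"
      by (auto simp: Fb_def)
    have xp: "x permutes Omega" using bij_imp_permutes[OF bx] ox by blast
    have "jtype s x = t"
    proof (intro ext)
      fix i j k
      show "jtype s x i j k = t i j k"
      proof (cases "i < nu \<and> j < nu \<and> k < nu")
        case True
        then have "card {w\<in>Omega. l w = (i, k) \<and> idx (x w) = j} = t i j k"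
          using cx by (auto simp: I_def J_def t'_def)
        then show ?thesis using set_ijk[OF sp xp] True by (simp add: l_def jtype_def)
      next
        case False then show ?thesis using tz by (auto simp: jtype_def)
      qed
    qed
    then show "x \<in> {x\<in>SN Omega. jtype s x = t}" using xp by (simp add: SN_def)
  qed
  have cnt: "card (Fb Omega Omega l idx I J t') * (\<Prod>\<alpha>\<in>I. \<Prod>\<beta>\<in>J. fact (t' \<alpha> \<beta>)) =
    (\<Prod>\<alpha>\<in>I. fact (card {x\<in>Omega. l x = \<alpha>})) * (\<Prod>\<beta>\<in>J. fact (card {x\<in>Omega. idx x = \<beta>}))"
  proof (rule Fb_count)
    show "finite Omega" "finite Omega" "finite I" "finite J" by (auto simp: fin I_def J_def)
    show "l ` Omega \<subseteq> I" using idx permutes_in_image[OF sp] by (auto simp: l_def I_def)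
    show "idx ` Omega \<subseteq> J" using idx by (auto simp: J_def)
    show "\<forall>\<alpha>\<in>I. (\<Sum>\<beta>\<in>J. t' \<alpha> \<beta>) = card {x\<in>Omega. l x = \<alpha>}"
    proof
      fix \<alpha> assume "\<alpha> \<in> I"
      then obtain i k where ik: "\<alpha> = (i, k)" "i < nu" "k < nu" by (auto simp: I_def)
      show "(\<Sum>\<beta>\<in>J. t' \<alpha> \<beta>) = card {x\<in>Omega. l x = \<alpha>}"
        using tj ik set_ik[OF sp ik(2,3)] ctype_card[OF sp ik(2,3)]
        by (simp add: t'_def J_def l_def)
    qed
    show "\<forall>\<beta>\<in>J. (\<Sum>\<alpha>\<in>I. t' \<alpha> \<beta>) = card {x\<in>Omega. idx x = \<beta>}"
    proof
      fix j assume "j \<in> J"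
      then have j: "j < nu" by (simp add: J_def)
      have "(\<Sum>\<alpha>\<in>I. t' \<alpha> j) = (\<Sum>i<nu. \<Sum>k<nu. t i j k)"
        unfolding I_def t'_def by (simp add: sum.cartesian_product split_beta)
      also have "\<dots> = (\<Sum>k<nu. \<Sum>i<nu. t i j k)" by (rule sum.swap)
      also have "\<dots> = (\<Sum>k<nu. b j k)" using ti j by simp
      also have "\<dots> = n j" using b j by (simp add: admissible_def)
      also have "\<dots> = card {x\<in>Omega. idx x = j}" using P_idx[OF j] Pcard j by simp
      finally show "(\<Sum>\<alpha>\<in>I. t' \<alpha> j) = card {x\<in>Omega. idx x = j}" .
    qed
  qed
  have p1: "(\<Prod>\<alpha>\<in>I. \<Prod>\<beta>\<in>J. (fact (t' \<alpha> \<beta>) :: nat)) = (\<Prod>i<nu. \<Prod>j<nu. \<Prod>k<nu. fact (t i j k))"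
  proof -
    have "(\<Prod>\<alpha>\<in>I. \<Prod>\<beta>\<in>J. (fact (t' \<alpha> \<beta>) :: nat)) = (\<Prod>i<nu. \<Prod>k<nu. \<Prod>j<nu. fact (t i j k))"
      unfolding I_def J_def prod_pair by (simp add: t'_def)
    also have "\<dots> = (\<Prod>i<nu. \<Prod>j<nu. \<Prod>k<nu. fact (t i j k))"
      by (rule prod.cong[OF refl], rule prod.swap)
    finally show ?thesis .
  qed
  have p2: "(\<Prod>\<alpha>\<in>I. (fact (card {x\<in>Omega. l x = \<alpha>}) :: nat)) = (\<Prod>i<nu. \<Prod>k<nu. fact (ctype s i k))"
  proof -
    have "(\<Prod>\<alpha>\<in>I. (fact (card {x\<in>Omega. l x = \<alpha>}) :: nat)) = (\<Prod>i<nu. \<Prod>k<nu. fact (card {x\<in>Omega. l x = (i, k)}))"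
      unfolding I_def prod_pair ..
    also have "\<dots> = (\<Prod>i<nu. \<Prod>k<nu. fact (ctype s i k))"
    proof (rule prod.cong[OF refl], rule prod.cong[OF refl])
      fix i k assume "i \<in> {..<nu}" "k \<in> {..<nu}"
      then show "(fact (card {x\<in>Omega. l x = (i, k)}) :: nat) = fact (ctype s i k)"
        using set_ik[OF sp] ctype_card[OF sp] by (simp add: l_def)
    qed
    finally show ?thesis .
  qed
  have p3: "(\<Prod>\<beta>\<in>J. (fact (card {x\<in>Omega. idx x = \<beta>}) :: nat)) = (\<Prod>j<nu. fact (n j))"
    unfolding J_def using P_idx Pcard by (intro prod.cong refl) simp
  have "card {x\<in>SN Omega. jtype s x = t} * (\<Prod>i<nu. \<Prod>j<nu. \<Prod>k<nu. fact (t i j k)) =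
     (\<Prod>i<nu. \<Prod>k<nu. fact (ctype s i k)) * (\<Prod>j<nu. fact (n j))"
    using cnt unfolding eq p1 p2 p3 .
  then have "real (card {x\<in>SN Omega. jtype s x = t}) * real (\<Prod>i<nu. \<Prod>j<nu. \<Prod>k<nu. fact (t i j k)) =
     real ((\<Prod>i<nu. \<Prod>k<nu. fact (ctype s i k)) * (\<Prod>j<nu. fact (n j)))"
    by (simp only: of_nat_mult[symmetric])
  moreover have "real (\<Prod>i<nu. \<Prod>j<nu. \<Prod>k<nu. (fact (t i j k) :: nat)) \<noteq> 0"
    by (simp add: prod_zero_iff)
  ultimately show ?thesis by (simp only: eq_divide_eq, simp)
qed

lemma card_X:
  assumes s: "s \<in> SN Omega" and b: "admissible nu n b"
  shows "real (card {x \<in> xi Omega nu P a. s \<circ> inv x \<in> xi Omega nu P b}) =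
    real ((\<Prod>i<nu. \<Prod>k<nu. fact (ctype s i k)) * (\<Prod>j<nu. fact (n j))) *
    (\<Sum>t\<in>T_set nu a b (ctype s). 1 / real (\<Prod>i<nu. \<Prod>j<nu. \<Prod>k<nu. (fact (t i j k) :: nat)))"
proof -
  let ?T = "T_set nu a b (ctype s)"
  let ?X = "{x \<in> xi Omega nu P a. s \<circ> inv x \<in> xi Omega nu P b}"
  have X: "?X = {x\<in>SN Omega. jtype s x \<in> ?T}" using X_char[OF s] by blast
  have finSN: "finite (SN Omega)" using fin by (simp add: SN_def finite_permutations)
  have "card ?X = (\<Sum>x\<in>?X. (1::nat))" by simp
  also have "\<dots> = (\<Sum>t\<in>?T. \<Sum>x\<in>{x\<in>?X. jtype s x = t}. (1::nat))"
    by (rule sum.group[symmetric]) (use finSN finite_T_set X in auto)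
  also have "\<dots> = (\<Sum>t\<in>?T. card {x\<in>SN Omega. jtype s x = t})"
    by (rule sum.cong[OF refl]) (use X in \<open>auto intro!: arg_cong[where f=card]\<close>)
  finally have "real (card ?X) = (\<Sum>t\<in>?T. real (card {x\<in>SN Omega. jtype s x = t}))"
    by simp
  also have "\<dots> = (\<Sum>t\<in>?T. real ((\<Prod>i<nu. \<Prod>k<nu. fact (ctype s i k)) * (\<Prod>j<nu. fact (n j))) /
     real (\<Prod>i<nu. \<Prod>j<nu. \<Prod>k<nu. (fact (t i j k) :: nat)))"
    by (rule sum.cong[OF refl]) (rule count_fixed_type[OF s b])
  also have "\<dots> = real ((\<Prod>i<nu. \<Prod>k<nu. fact (ctype s i k)) * (\<Prod>j<nu. fact (n j))) *
    (\<Sum>t\<in>?T. 1 / real (\<Prod>i<nu. \<Prod>j<nu. \<Prod>k<nu. (fact (t i j k) :: nat)))"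
    by (simp add: sum_distrib_left)
  finally show ?thesis .
qed

lemma ctype_adm:
  assumes s: "s \<in> SN Omega"
  shows "ctype s \<in> adm_set nu n" and "s \<in> xi Omega nu P (ctype s)"
    and "\<And>c. c \<in> adm_set nu n \<Longrightarrow> s \<in> xi Omega nu P c \<Longrightarrow> c = ctype s"
proof -
  have sp: "s permutes Omega" using s by (simp add: SN_def)
  have col: "(\<Sum>i<nu. ctype s i k) = n k" if k: "k < nu" for k
  proof -
    have "(\<Sum>i<nu. ctype s i k) = (\<Sum>i<nu. card {w\<in>{w\<in>Omega. s w \<in> P k}. id w \<in> P i})"
      using Psub ctype_card[OF sp _ k] by (intro sum.cong refl) (auto intro!: arg_cong[where f=card])
    also have "\<dots> = card {w\<in>Omega. s w \<in> P k}"
      by (rule card_split[symmetric]) (use fin in auto)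
    also have "\<dots> = card (s ` {w\<in>Omega. s w \<in> P k})"
      by (rule card_image[symmetric]) (use permutes_inj_on[OF sp] in auto)
    also have "s ` {w\<in>Omega. s w \<in> P k} = P k"
    proof (intro set_eqI iffI)
      fix v assume "v \<in> P k"
      then have "v \<in> Omega" using Psub k by auto
      then obtain w where "w \<in> Omega" "s w = v" using permutes_image[OF sp] by (metis imageE)
      then show "v \<in> s ` {w\<in>Omega. s w \<in> P k}" using \<open>v \<in> P k\<close> by auto
    qed auto
    finally show ?thesis using Pcard k by simp
  qed
  have row: "(\<Sum>k<nu. ctype s i k) = n i" if i: "i < nu" for i
  proof -
    have "(\<Sum>k<nu. ctype s i k) = (\<Sum>k<nu. card {w\<in>P i. s w \<in> P k})"
      using ctype_card[OF sp i] by simp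
    also have "\<dots> = card (P i)"
      by (rule card_split[symmetric]) (use Pfin[OF i] Psub i permutes_in_image[OF sp] in auto)
    finally show ?thesis using Pcard i by simp
  qed
  show "ctype s \<in> adm_set nu n"
    using row col by (auto simp: adm_set_def admissible_def ctype_def)
  show "s \<in> xi Omega nu P (ctype s)" using s by (simp add: xi_def ctype_def)
  fix c assume c: "c \<in> adm_set nu n" "s \<in> xi Omega nu P c"
  show "c = ctype s"
  proof (intro ext)
    fix i k show "c i k = ctype s i k"
      using c by (cases "i < nu \<and> k < nu") (auto simp: adm_set_def xi_def ctype_def)
  qed
qed

end



lemma final_alg:
  fixes N Aa Ab C S :: real
  assumes "N > 0" "Aa > 0" "Ab > 0" "C > 0"
  shows "(C * N * S) * ((1 / (N^2 / Aa)) * (1 / (N^2 / Ab))) = (Aa * Ab / N * S) * (1 / (N^2 / C))"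
  using assms by (simp add: field_simps power2_eq_square)

theorem proposition1:
  fixes Omega :: "'a set" and nu :: nat and n :: "nat \<Rightarrow> nat" and P :: "nat \<Rightarrow> 'a set"
    and a b :: "nat \<Rightarrow> nat \<Rightarrow> nat"
  assumes "nu \<ge> 1"
    and "finite Omega"
    and "\<forall>j<nu. P j \<subseteq> Omega"
    and "(\<Union>j<nu. P j) = Omega"
    and "\<forall>i<nu. \<forall>j<nu. i \<noteq> j \<longrightarrow> P i \<inter> P j = {}"
    and "\<forall>j<nu. card (P j) = n j"
    and "admissible nu n a" and "admissible nu n b"
  shows "gmult Omega (Xi Omega nu n P a) (Xi Omega nu n P b) =
    (\<lambda>g. \<Sum>c \<in> adm_set nu n.
       complex_of_real
         ((\<Prod>i<nu. \<Prod>j<nu. fact (a i j)) * (\<Prod>j<nu. \<Prod>k<nu. fact (b j k)) / (\<Prod>j<nu. fact (n j))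
          * (\<Sum>t \<in> T_set nu a b c. 1 / (\<Prod>i<nu. \<Prod>j<nu. \<Prod>k<nu. fact (t i j k))))
       * Xi Omega nu n P c g)"
proof -
  interpret yset Omega nu n P using assms by unfold_locales auto
  let ?K = "\<lambda>c. complex_of_real
         ((\<Prod>i<nu. \<Prod>j<nu. fact (a i j)) * (\<Prod>j<nu. \<Prod>k<nu. fact (b j k)) / (\<Prod>j<nu. fact (n j))
          * (\<Sum>t \<in> T_set nu a b c. 1 / (\<Prod>i<nu. \<Prod>j<nu. \<Prod>k<nu. fact (t i j k))))"
  show ?thesis
  proof (rule ext)
    fix s :: "'a \<Rightarrow> 'a"
    let ?Pairs = "{(x, y). x \<in> SN Omega \<and> y \<in> SN Omega \<and> y \<circ> x = s}"
    show "gmult Omega (Xi Omega nu n P a) (Xi Omega nu n P b) s =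
      (\<Sum>c \<in> adm_set nu n. ?K c * Xi Omega nu n P c s)"
    proof (cases "s \<in> SN Omega")
      case False
      have "?Pairs = {}" using False permutes_compose by (auto simp: SN_def)
      moreover have "Xi Omega nu n P c s = 0" for c using False by (simp add: Xi_def xi_def)
      ultimately show ?thesis unfolding gmult_def by (simp only: sum.empty) simp
    next
      case True
      have sp: "s permutes Omega" using True by (simp add: SN_def)
      have finSN: "finite (SN Omega)" using assms(2) by (simp add: SN_def finite_permutations)
      let ?X = "{x \<in> xi Omega nu P a. s \<circ> inv x \<in> xi Omega nu P b}"
      have pairs: "?Pairs = (\<lambda>x. (x, s \<circ> inv x)) ` SN Omega"
      proof (intro set_eqI iffI)
        fix z assume "z \<in> ?Pairs"
        then obtain x y where z: "z = (x, y)" "x \<in> SN Omega" "y \<in> SN Omega" "y \<circ> x = s" by auto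
        then have xp: "x permutes Omega" by (simp add: SN_def)
        have "y = y \<circ> (x \<circ> inv x)" using permutes_inv_o(1)[OF xp] by simp
        also have "\<dots> = s \<circ> inv x" using z by (simp add: o_assoc)
        finally show "z \<in> (\<lambda>x. (x, s \<circ> inv x)) ` SN Omega" using z by auto
      next
        fix z assume "z \<in> (\<lambda>x. (x, s \<circ> inv x)) ` SN Omega"
        then obtain x where z: "z = (x, s \<circ> inv x)" "x \<in> SN Omega" by auto
        then have xp: "x permutes Omega" by (simp add: SN_def)
        have "s \<circ> inv x \<in> SN Omega" using permutes_compose[OF permutes_inv[OF xp] sp] by (simp add: SN_def)
        moreover have "(s \<circ> inv x) \<circ> x = s" using permutes_inv_o(2)[OF xp] by (simp add: o_assoc[symmetric])
        ultimately show "z \<in> ?Pairs" using z by auto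
      qed
      have inj: "inj_on (\<lambda>x. (x, s \<circ> inv x)) (SN Omega)" by (rule inj_onI) simp
      define ma where "ma = mu nu n a"
      define mb where "mb = mu nu n b"
      have "gmult Omega (Xi Omega nu n P a) (Xi Omega nu n P b) s =
          (\<Sum>x\<in>SN Omega. Xi Omega nu n P a x * Xi Omega nu n P b (s \<circ> inv x))"
        unfolding gmult_def pairs by (simp add: sum.reindex[OF inj])
      also have "\<dots> = (\<Sum>x\<in>SN Omega. if x \<in> ?X then complex_of_real (1 / ma) * complex_of_real (1 / mb) else 0)"
        by (rule sum.cong[OF refl]) (simp add: Xi_def ma_def mb_def)
      also have "\<dots> = (\<Sum>x\<in>{x\<in>SN Omega. x \<in> ?X}. complex_of_real (1 / ma) * complex_of_real (1 / mb))"
        by (rule sum.inter_filter[symmetric, OF finSN])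
      also have "{x\<in>SN Omega. x \<in> ?X} = ?X" by (auto simp: xi_def)
      finally have L: "gmult Omega (Xi Omega nu n P a) (Xi Omega nu n P b) s =
         complex_of_real (real (card ?X) * ((1 / ma) * (1 / mb)))" by simp
      define c0 where "c0 = ctype s"
      have c0: "c0 \<in> adm_set nu n" "s \<in> xi Omega nu P c0"
        and uniq: "\<And>c. c \<in> adm_set nu n \<Longrightarrow> s \<in> xi Omega nu P c \<Longrightarrow> c = c0"
        unfolding c0_def using ctype_adm[OF True] by blast+
      have "(\<Sum>c \<in> adm_set nu n. ?K c * Xi Omega nu n P c s) =
          ?K c0 * Xi Omega nu n P c0 s + (\<Sum>c \<in> adm_set nu n - {c0}. ?K c * Xi Omega nu n P c s)"
        by (rule sum.remove[OF finite_adm_set c0(1)])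
      also have "(\<Sum>c \<in> adm_set nu n - {c0}. ?K c * Xi Omega nu n P c s) = 0"
      proof (rule sum.neutral, rule ballI)
        fix c assume "c \<in> adm_set nu n - {c0}"
        then have "s \<notin> xi Omega nu P c" using uniq by blast
        then have "Xi Omega nu n P c s = 0" unfolding Xi_def by simp
        then show "?K c * Xi Omega nu n P c s = 0" by (simp only: mult_zero_right)
      qed
      also have "Xi Omega nu n P c0 s = complex_of_real (1 / mu nu n c0)"
        unfolding Xi_def using c0(2) by simp
      finally have R: "(\<Sum>c \<in> adm_set nu n. ?K c * Xi Omega nu n P c s) = ?K c0 * complex_of_real (1 / mu nu n c0)"
        by (simp only: add_0_right)
      define N :: real where "N = (\<Prod>j<nu. fact (n j))"
      define Aa :: real where "Aa = (\<Prod>i<nu. \<Prod>j<nu. fact (a i j))"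
      define Ab :: real where "Ab = (\<Prod>j<nu. \<Prod>k<nu. fact (b j k))"
      define C :: real where "C = (\<Prod>i<nu. \<Prod>k<nu. fact (c0 i k))"
      define S :: real where "S = (\<Sum>t \<in> T_set nu a b c0. 1 / (\<Prod>i<nu. \<Prod>j<nu. \<Prod>k<nu. fact (t i j k)))"
      have cX: "real (card ?X) = C * N * S"
        unfolding card_X[OF True assms(8)] C_def N_def S_def c0_def
        by (simp add: of_nat_prod)
      have mua: "ma = N^2 / Aa" by (simp add: ma_def mu_def N_def Aa_def prod_power_distrib)
      have mub: "mb = N^2 / Ab" by (simp add: mb_def mu_def N_def Ab_def prod_power_distrib)
      have muc: "mu nu n c0 = N^2 / C" by (simp add: mu_def N_def C_def prod_power_distrib)
      have pos: "N > 0" "Aa > 0" "Ab > 0" "C > 0"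
        by (auto simp: N_def Aa_def Ab_def C_def intro!: prod_pos)
      have "real (card ?X) * ((1 / ma) * (1 / mb)) = (Aa * Ab / N * S) * (1 / mu nu n c0)"
        unfolding cX mua mub muc by (rule final_alg[OF pos])
      then show ?thesis unfolding L R by (simp add: Aa_def Ab_def N_def S_def)
    qed
  qed
qed


end
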